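(* There are infinitely many (pairwise non-isomorphic) finite simple graphs $G$ such that $G$ is 2-connected, cubic, and bipartite, $v(G) \equiv 0 \pmod 6$, and $G$ has no $\Lambda$-factor.
   Context: Graphs are finite, undirected, without loops or multiple edges; $v(G)=|V(G)|$. $\Lambda$ denotes the path on 3 vertices. A $\Lambda$-factor of $G$ is a spanning subgraph of $G$ each of whose connected components is a 3-vertex path. *)

theory Defs
  imports Main
begin

definition simple_graph :: "'a set \<Rightarrow> ('a \<Rightarrow> 'a \<Rightarrow> bool) \<Rightarrow> bool" where
  "simple_graph V E \<longleftrightarrow> finite V \<and> (\<forall>x y. E x y \<longrightarrow> x \<in> V \<and> y \<in> V)
     \<and> (\<forall>x y. E x y \<longrightarrow> E y x) \<and> (\<forall>x. \<not> E x x)"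

definition neighbours :: "('a \<Rightarrow> 'a \<Rightarrow> bool) \<Rightarrow> 'a \<Rightarrow> 'a set" where
  "neighbours E x = {y. E x y}"

definition cubic :: "'a set \<Rightarrow> ('a \<Rightarrow> 'a \<Rightarrow> bool) \<Rightarrow> bool" where
  "cubic V E \<longleftrightarrow> (\<forall>x\<in>V. card (neighbours E x) = 3)"

definition bipartite :: "'a set \<Rightarrow> ('a \<Rightarrow> 'a \<Rightarrow> bool) \<Rightarrow> bool" where
  "bipartite V E \<longleftrightarrow> (\<exists>A. A \<subseteq> V \<and>
     (\<forall>x y. E x y \<longrightarrow> (x \<in> A \<longleftrightarrow> y \<notin> A)))"

definition connected_graph :: "'a set \<Rightarrow> ('a \<Rightarrow> 'a \<Rightarrow> bool) \<Rightarrow> bool" where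
  "connected_graph V E \<longleftrightarrow> V \<noteq> {} \<and>
     (\<forall>x\<in>V. \<forall>y\<in>V. (\<lambda>u v. u \<in> V \<and> v \<in> V \<and> E u v)\<^sup>*\<^sup>* x y)"

definition two_connected :: "'a set \<Rightarrow> ('a \<Rightarrow> 'a \<Rightarrow> bool) \<Rightarrow> bool" where
  "two_connected V E \<longleftrightarrow> card V > 2 \<and> connected_graph V E \<and>
     (\<forall>x\<in>V. connected_graph (V - {x}) E)"

definition is_P3 :: "'a set \<Rightarrow> ('a \<Rightarrow> 'a \<Rightarrow> bool) \<Rightarrow> bool" where
  "is_P3 C F \<longleftrightarrow> (\<exists>a b c. a \<noteq> b \<and> b \<noteq> c \<and> a \<noteq> c \<and> C = {a, b, c}
     \<and> F a b \<and> F b c \<and> \<not> F a c)"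

definition Lambda_factor :: "'a set \<Rightarrow> ('a \<Rightarrow> 'a \<Rightarrow> bool) \<Rightarrow> ('a \<Rightarrow> 'a \<Rightarrow> bool) \<Rightarrow> bool" where
  "Lambda_factor V E F \<longleftrightarrow> simple_graph V F \<and> (\<forall>x y. F x y \<longrightarrow> E x y) \<and>
     (\<forall>x\<in>V. is_P3 {y. F\<^sup>*\<^sup>* x y} F)"

definition has_Lambda_factor :: "'a set \<Rightarrow> ('a \<Rightarrow> 'a \<Rightarrow> bool) \<Rightarrow> bool" where
  "has_Lambda_factor V E \<longleftrightarrow> (\<exists>F. Lambda_factor V E F)"

definition graph_iso :: "'a set \<Rightarrow> ('a \<Rightarrow> 'a \<Rightarrow> bool) \<Rightarrow> 'b set \<Rightarrow> ('b \<Rightarrow> 'b \<Rightarrow> bool) \<Rightarrow> bool" where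
  "graph_iso V1 E1 V2 E2 \<longleftrightarrow> (\<exists>f. bij_betw f V1 V2 \<and>
     (\<forall>x\<in>V1. \<forall>y\<in>V1. E1 x y \<longleftrightarrow> E2 (f x) (f y)))"

end

theory Submission
  imports Defs
begin

section \<open>The construction\<close>

definition nbl :: "nat \<Rightarrow> nat list" where
"nbl j = [[2, 10], [3, 11, 19], [0, 4, 6], [1, 5, 7], [5, 2, 8], [4, 3, 9], [7, 8, 2], [6, 9, 3], [9, 6, 4], [8, 7, 5], [0, 12, 14], [1, 13, 15], [13, 10, 16], [12, 11, 17], [15, 16, 10], [14, 17, 11], [17, 14, 12], [16, 15, 13], [20, 22], [1, 21, 23], [21, 18, 24], [20, 19, 25], [23, 24, 18], [22, 25, 19], [25, 22, 20], [24, 23, 21]] ! j"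

definition colset :: "nat set" where "colset = {0, 3, 4, 6, 9, 11, 12, 14, 17, 19, 20, 22, 25}"

definition pa1 :: "nat \<Rightarrow> nat list" where
"pa1 j = [[0], [1, 3, 5, 4, 2, 0], [2, 0], [3, 5, 4, 2, 0], [4, 2, 0], [5, 4, 2, 0], [6, 2, 0], [7, 6, 2, 0], [8, 6, 2, 0], [9, 8, 6, 2, 0], [10, 0], [11, 13, 12, 10, 0], [12, 10, 0], [13, 12, 10, 0], [14, 10, 0], [15, 14, 10, 0], [16, 14, 10, 0], [17, 16, 14, 10, 0], [18], [19, 1, 3, 5, 4, 2, 0], [20, 21, 19, 1, 3, 5, 4, 2, 0], [21, 19, 1, 3, 5, 4, 2, 0], [22, 23, 19, 1, 3, 5, 4, 2, 0], [23, 19, 1, 3, 5, 4, 2, 0], [24, 25, 23, 19, 1, 3, 5, 4, 2, 0], [25, 23, 19, 1, 3, 5, 4, 2, 0]] ! j"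

definition pa2 :: "nat \<Rightarrow> nat list" where
"pa2 j = [[0], [1, 19, 21, 20, 18], [2, 4, 5, 3, 1, 19, 21, 20, 18], [3, 1, 19, 21, 20, 18], [4, 5, 3, 1, 19, 21, 20, 18], [5, 3, 1, 19, 21, 20, 18], [6, 7, 3, 1, 19, 21, 20, 18], [7, 3, 1, 19, 21, 20, 18], [8, 9, 7, 3, 1, 19, 21, 20, 18], [9, 7, 3, 1, 19, 21, 20, 18], [10, 12, 13, 11, 1, 19, 21, 20, 18], [11, 1, 19, 21, 20, 18], [12, 13, 11, 1, 19, 21, 20, 18], [13, 11, 1, 19, 21, 20, 18], [14, 15, 11, 1, 19, 21, 20, 18], [15, 11, 1, 19, 21, 20, 18], [16, 17, 15, 11, 1, 19, 21, 20, 18], [17, 15, 11, 1, 19, 21, 20, 18], [18], [19, 21, 20, 18], [20, 18], [21, 20, 18], [22, 18], [23, 22, 18], [24, 22, 18], [25, 24, 22, 18]] ! j"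

fun lwalk :: "nat list \<Rightarrow> bool" where
  "lwalk (a # b # r) = (a < 26 \<and> b \<in> set (nbl a) \<and> lwalk (b # r))"
| "lwalk [a] = (a < 26)"
| "lwalk [] = True"

definition GV :: "nat \<Rightarrow> nat set" where "GV N = {..<26*N}"

definition GE :: "nat \<Rightarrow> nat \<Rightarrow> nat \<Rightarrow> bool" where
  "GE N a b \<longleftrightarrow> a < 26*N \<and> b < 26*N \<and>
     ((a div 26 = b div 26 \<and> b mod 26 \<in> set (nbl (a mod 26)))
      \<or> (a mod 26 = 18 \<and> b mod 26 = 0 \<and> b div 26 = Suc (a div 26) mod N)
      \<or> (a mod 26 = 0 \<and> b mod 26 = 18 \<and> a div 26 = Suc (b div 26) mod N))"

lemma nbl_facts: "\<forall>j<26. (\<forall>k\<in>set (nbl j). k < 26 \<and> j \<in> set (nbl k) \<and> k \<noteq> j \<and> (j \<in> colset \<longleftrightarrow> k \<notin> colset))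
  \<and> distinct (nbl j) \<and> length (nbl j) = (if j = 0 \<or> j = 18 then 2 else 3)"
  unfolding colset_def by code_simp

lemma path_facts: "\<forall>j<26. lwalk (pa1 j) \<and> lwalk (pa2 j) \<and> pa1 j \<noteq> [] \<and> pa2 j \<noteq> [] \<and>
   hd (pa1 j) = j \<and> hd (pa2 j) = j \<and> last (pa1 j) \<in> {0,18} \<and> last (pa2 j) \<in> {0,18} \<and>
   set (pa1 j) \<inter> set (pa2 j) = {j}"
  unfolding pa1_def pa2_def by code_simp

lemma path18: "lwalk [18, 20, 21, 19, 1, 3, 5, 4, 2, 0]"
  by code_simp

lemma nbl_sym: "j < 26 \<Longrightarrow> k \<in> set (nbl j) \<Longrightarrow> k < 26 \<and> j \<in> set (nbl k) \<and> k \<noteq> j"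
  using nbl_facts by blast

lemma nbl_col: "j < 26 \<Longrightarrow> k \<in> set (nbl j) \<Longrightarrow> (j \<in> colset \<longleftrightarrow> k \<notin> colset)"
  using nbl_facts by blast

lemma GE_sym: "GE N a b \<Longrightarrow> GE N b a"
  unfolding GE_def using nbl_sym[of "a mod 26" "b mod 26"] by auto

lemma GE_irrefl: "\<not> GE N a a"
  unfolding GE_def using nbl_sym[of "a mod 26" "a mod 26"] by auto

lemma GE_in: "GE N a b \<Longrightarrow> a \<in> GV N \<and> b \<in> GV N"
  unfolding GE_def GV_def by auto

lemma simple: "simple_graph (GV N) (GE N)"
  unfolding simple_graph_def using GE_sym GE_irrefl GE_in by (auto simp: GV_def)

lemma predmod: "(i::nat) < N \<Longrightarrow> Suc ((i + N - 1) mod N) mod N = i"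
proof -
  assume "i < N"
  then have "Suc ((i + N - 1) mod N) mod N = Suc (i + N - 1) mod N" by (simp add: mod_Suc_eq)
  also have "Suc (i + N - 1) = i + N" using \<open>i < N\<close> by simp
  finally show ?thesis using \<open>i < N\<close> by simp
qed

lemma predmod2: "(d::nat) < N \<Longrightarrow> (Suc d mod N + N - 1) mod N = d"
proof (cases "Suc d < N")
  case True then show ?thesis by simp
next
  case False
  assume "d < N"
  then have "Suc d = N" using False by simp
  then show ?thesis by simp
qed

lemma GE_nb: assumes "a < 26*N"
  shows "{y. GE N a y} = (\<lambda>k. 26*(a div 26)+k) ` set (nbl (a mod 26))
     \<union> (if a mod 26 = 18 then {26*(Suc (a div 26) mod N)} else {})
     \<union> (if a mod 26 = 0 then {26*((a div 26 + N - 1) mod N) + 18} else {})"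
  (is "?L = ?A \<union> ?B \<union> ?C")
proof (intro set_eqI iffI)
  fix y assume "y \<in> ?L"
  then have g: "GE N a y" by simp
  have N0: "N > 0" using assms by simp
  have y: "y = 26 * (y div 26) + y mod 26" by simp
  from g consider (w) "a div 26 = y div 26 \<and> y mod 26 \<in> set (nbl (a mod 26))"
    | (c1) "a mod 26 = 18 \<and> y mod 26 = 0 \<and> y div 26 = Suc (a div 26) mod N"
    | (c2) "a mod 26 = 0 \<and> y mod 26 = 18 \<and> a div 26 = Suc (y div 26) mod N"
    unfolding GE_def by blast
  then show "y \<in> ?A \<union> ?B \<union> ?C"
  proof cases
    case w then have "y \<in> ?A" using y by (metis image_eqI)
    then show ?thesis by blast
  next
    case c1 then have "y \<in> ?B" using y by simp
    then show ?thesis by blast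
  next
    case c2
    have "y div 26 < N" using g unfolding GE_def by (simp add: less_mult_imp_div_less mult.commute)
    then have "(a div 26 + N - 1) mod N = y div 26" using c2 predmod2 by simp
    then have "y \<in> ?C" using y c2 by simp
    then show ?thesis by blast
  qed
next
  fix y assume y: "y \<in> ?A \<union> ?B \<union> ?C"
  have N0: "N > 0" using assms by (cases N) auto
  have ia: "a div 26 < N" using assms by (simp add: less_mult_imp_div_less mult.commute)
  have am: "a mod 26 < 26" by simp
  from y consider (A) "y \<in> ?A" | (B) "y \<in> ?B" | (C) "y \<in> ?C" by blast
  then show "y \<in> ?L"
  proof cases
    case A
    then obtain k where k: "k \<in> set (nbl (a mod 26))" "y = 26*(a div 26) + k" by auto
    have "k < 26" using nbl_sym[OF am k(1)] by simp
    then have "y div 26 = a div 26" "y mod 26 = k" using k by auto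
    moreover have "y < 26 * N" using k(2) \<open>k<26\<close> ia by linarith
    ultimately show ?thesis using k assms unfolding GE_def by auto
  next
    case B
    then have c: "a mod 26 = 18" "y = 26*(Suc (a div 26) mod N)" by (auto split: if_splits)
    have "Suc (a div 26) mod N < N" using N0 by simp
    then have "y < 26 * N" using c by simp
    then show ?thesis using c assms unfolding GE_def by auto
  next
    case C
    then have c: "a mod 26 = 0" "y = 26*((a div 26 + N - 1) mod N) + 18" by (auto split: if_splits)
    have "(a div 26 + N - 1) mod N < N" using N0 by simp
    then have "y < 26 * N" using c by linarith
    moreover have "y div 26 = (a div 26 + N - 1) mod N" "y mod 26 = 18" using c by auto
    ultimately show ?thesis using c assms predmod[OF ia] unfolding GE_def by auto
  qed
qed

lemma nb_eq: "neighbours E a = {y. E a y}" by (simp add: neighbours_def)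
lemma ne26: assumes "r < 26" "s < 26" "r \<noteq> s" shows "26*(i::nat)+r \<noteq> 26*m+s"
proof
  assume "26*i+r = 26*m+s"
  then have "(26*i+r) mod 26 = (26*m+s) mod 26" by simp
  then show False using assms by simp
qed

lemma cubicG: assumes "2 \<le> N" shows "cubic (GV N) (GE N)"
  unfolding cubic_def nb_eq
proof
  fix a assume "a \<in> GV N"
  then have a: "a < 26*N" by (simp add: GV_def)
  define i where "i = a div 26"
  define j where "j = a mod 26"
  have j26: "j < 26" by (simp add: j_def)
  have nbA: "{y. GE N a y} = (\<lambda>k. 26*i+k) ` set (nbl j)
     \<union> (if j = 18 then {26*(Suc i mod N)} else {})
     \<union> (if j = 0 then {26*((i + N - 1) mod N) + 18} else {})"
    using GE_nb[OF a] by (simp add: i_def j_def)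
  show "card {y. GE N a y} = 3"
  proof (cases "j = 0")
    case True
    have "nbl 0 = [2,10]" by (simp add: nbl_def)
    then have "{y. GE N a y} = {26*i+2, 26*i+10, 26*((i + N - 1) mod N) + 18}"
      using nbA True by auto
    moreover have "26*i+2 \<noteq> 26*((i + N - 1) mod N) + 18" "26*i+10 \<noteq> 26*((i + N - 1) mod N) + 18"
      using ne26[of 2 18 i "(i + N - 1) mod N"] ne26[of 10 18 i "(i + N - 1) mod N"] by auto
    ultimately show ?thesis by simp
  next
    case False
    show ?thesis
    proof (cases "j = 18")
      case True
      have "nbl 18 = [20,22]" by (simp add: nbl_def)
      then have "{y. GE N a y} = {26*i+20, 26*i+22, 26*(Suc i mod N)}"
        using nbA True by auto
      moreover have "26*i+20 \<noteq> 26*(Suc i mod N)" "26*i+22 \<noteq> 26*(Suc i mod N)"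
        using ne26[of 20 0 i "Suc i mod N"] ne26[of 22 0 i "Suc i mod N"] by auto
      ultimately show ?thesis by simp
    next
      case F2: False
      have "{y. GE N a y} = (\<lambda>k. 26*i+k) ` set (nbl j)" using nbA False F2 by simp
      moreover have "card ((\<lambda>k. 26*i+k) ` set (nbl j)) = card (set (nbl j))"
        by (rule card_image) (simp add: inj_on_def)
      moreover have "card (set (nbl j)) = 3"
      proof -
        have h: "distinct (nbl j) \<and> length (nbl j) = (if j = 0 \<or> j = 18 then 2 else 3)"
          using nbl_facts j26 by blast
        then have "distinct (nbl j)" "length (nbl j) = 3" using False F2 by auto
        then show ?thesis using distinct_card by metis
      qed
      ultimately show ?thesis by simp
    qed
  qed
qed

lemma bipG: "bipartite (GV N) (GE N)"
  unfolding bipartite_def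
proof (intro exI[of _ "{a \<in> GV N. a mod 26 \<in> colset}"] conjI allI impI)
  show "{a \<in> GV N. a mod 26 \<in> colset} \<subseteq> GV N" by auto
  fix x y assume g: "GE N x y"
  have xy: "x \<in> GV N" "y \<in> GV N" using GE_in[OF g] by auto
  have "x mod 26 \<in> colset \<longleftrightarrow> y mod 26 \<notin> colset"
    using g nbl_col[of "x mod 26" "y mod 26"] unfolding GE_def by (auto simp: colset_def)
  then show "(x \<in> {a \<in> GV N. a mod 26 \<in> colset}) = (y \<notin> {a \<in> GV N. a mod 26 \<in> colset})"
    using xy by auto
qed

definition RR :: "nat \<Rightarrow> nat \<Rightarrow> nat \<Rightarrow> nat \<Rightarrow> bool" where
  "RR N x u v \<longleftrightarrow> u \<in> GV N - {x} \<and> v \<in> GV N - {x} \<and> GE N u v"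

lemma RR_sym: "RR N x u v \<Longrightarrow> RR N x v u"
  unfolding RR_def using GE_sym by blast

lemma rtranclp_symm: assumes "\<And>a b. r a b \<Longrightarrow> r b a" shows "r\<^sup>*\<^sup>* a b \<Longrightarrow> r\<^sup>*\<^sup>* b a"
proof (induction rule: rtranclp.induct)
  case (rtrancl_refl a) then show ?case by simp
next
  case (rtrancl_into_rtrancl a b c)
  then show ?case using assms converse_rtranclp_into_rtranclp by metis
qed

lemma RR_rsym: "(RR N x)\<^sup>*\<^sup>* a b \<Longrightarrow> (RR N x)\<^sup>*\<^sup>* b a"
  using rtranclp_symm[of "RR N x"] RR_sym by blast

lemma RR_end: "(RR N x)\<^sup>*\<^sup>* w z \<Longrightarrow> w \<in> GV N - {x} \<Longrightarrow> z \<in> GV N - {x}"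
  by (induction rule: rtranclp.induct) (auto simp: RR_def)

lemma lift: "i < N \<Longrightarrow> lwalk ps \<Longrightarrow> ps \<noteq> [] \<Longrightarrow> (\<forall>c\<in>set ps. 26*i + c \<noteq> x)
   \<Longrightarrow> (RR N x)\<^sup>*\<^sup>* (26*i + hd ps) (26*i + last ps)"
proof (induction ps rule: lwalk.induct)
  case (1 a b r)
  then have IH: "(RR N x)\<^sup>*\<^sup>* (26*i + b) (26*i + last (b#r))" by simp
  have ab: "a < 26" "b \<in> set (nbl a)" using 1 by auto
  have b26: "b < 26" using nbl_sym[OF ab] by simp
  have d: "(26*i+a) div 26 = i" "(26*i+a) mod 26 = a" "(26*i+b) div 26 = i" "(26*i+b) mod 26 = b"
    using ab b26 by auto
  have l: "26*i+a < 26*N" "26*i+b < 26*N" using ab b26 1(2) by linarith+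
  have nx: "26*i+a \<noteq> x" "26*i+b \<noteq> x" using 1(5) by auto
  have "RR N x (26*i+a) (26*i+b)"
    unfolding RR_def GE_def GV_def using d l nx ab(2) by simp
  then show ?case using IH converse_rtranclp_into_rtranclp by fastforce
qed auto

lemma block_reach: assumes "i < N" "j < 26" "x \<noteq> 26*i+j"
  shows "(RR N x)\<^sup>*\<^sup>* (26*i+j) (26*i) \<or> (RR N x)\<^sup>*\<^sup>* (26*i+j) (26*i+18)"
proof -
  have pf: "lwalk (pa1 j)" "lwalk (pa2 j)" "pa1 j \<noteq> []" "pa2 j \<noteq> []"
   "hd (pa1 j) = j" "hd (pa2 j) = j" "last (pa1 j) \<in> {0,18}" "last (pa2 j) \<in> {0,18}"
   "set (pa1 j) \<inter> set (pa2 j) = {j}"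
    using path_facts assms(2) by blast+
  have "(\<forall>c\<in>set (pa1 j). 26*i + c \<noteq> x) \<or> (\<forall>c\<in>set (pa2 j). 26*i + c \<noteq> x)"
  proof (rule ccontr)
    assume "\<not> ?thesis"
    then obtain c1 c2 where c: "c1 \<in> set (pa1 j)" "c2 \<in> set (pa2 j)" "26*i+c1 = x" "26*i+c2 = x" by auto
    then have "c1 = c2" by simp
    then have "c1 = j" using c pf(9) by blast
    then show False using c assms(3) by simp
  qed
  then show ?thesis
  proof
    assume "\<forall>c\<in>set (pa1 j). 26*i + c \<noteq> x"
    then have "(RR N x)\<^sup>*\<^sup>* (26*i + hd (pa1 j)) (26*i + last (pa1 j))"
      using lift[OF assms(1) pf(1) pf(3)] by blast
    then show ?thesis using pf by auto
  next
    assume "\<forall>c\<in>set (pa2 j). 26*i + c \<noteq> x"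
    then have "(RR N x)\<^sup>*\<^sup>* (26*i + hd (pa2 j)) (26*i + last (pa2 j))"
      using lift[OF assms(1) pf(2) pf(4)] by blast
    then show ?thesis using pf by auto
  qed
qed

lemma block_full: assumes "i < N" "\<forall>c<26. x \<noteq> 26*i+c" "j < 26"
  shows "(RR N x)\<^sup>*\<^sup>* (26*i+j) (26*i)"
proof -
  have "(RR N x)\<^sup>*\<^sup>* (26*i + hd [18, 20, 21, 19, 1, 3, 5, 4, 2, 0]) (26*i + last [18, 20, 21, 19, 1, 3, 5, 4, 2, 0])"
  proof (rule lift[OF assms(1) path18])
    show "\<forall>c\<in>set [18, 20, 21, 19, 1, 3, 5, 4, 2, 0]. 26 * i + c \<noteq> x"
    proof
      fix c assume "c \<in> set [18, 20, 21, 19, 1, 3, 5, 4, 2, 0::nat]"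
      then have "c < 26" by auto
      then show "26 * i + c \<noteq> x" using assms(2) by blast
    qed
  qed simp
  then have h: "(RR N x)\<^sup>*\<^sup>* (26*i+18) (26*i)" by simp
  have "x \<noteq> 26*i+j" using assms(2,3) by blast
  from block_reach[OF assms(1,3) this] show ?thesis using h by (meson rtranclp_trans)
qed

lemma cross: assumes "i < N" "26*i+18 \<noteq> x" "26*(Suc i mod N) \<noteq> x"
  shows "RR N x (26*i+18) (26*(Suc i mod N))"
proof -
  have N0: "N > 0" using assms by simp
  have "Suc i mod N < N" using N0 by simp
  then show ?thesis using assms unfolding RR_def GE_def GV_def by auto
qed

lemma modne: assumes "(k::nat) < N" "d + 1 < N" shows "(Suc k + d) mod N \<noteq> k"
proof (cases "Suc k + d < N")
  case True then show ?thesis by simp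
next
  case False
  then have "(Suc k + d) mod N = (Suc k + d - N) mod N" by (simp add: le_mod_geq)
  also have "\<dots> = Suc k + d - N" using assms by simp
  finally have e: "(Suc k + d) mod N = Suc k + d - N" .
  show ?thesis using e assms False by linarith
qed

lemma blockne: "(x::nat) div 26 \<noteq> b \<Longrightarrow> c < 26 \<Longrightarrow> x \<noteq> 26*b+c" by auto

lemma chain: assumes "x < 26*N" "2 \<le> N" "k = x div 26"
  shows "d + 1 < N \<Longrightarrow> (RR N x)\<^sup>*\<^sup>* (26*(Suc k mod N)) (26*((Suc k + d) mod N))"
proof (induction d)
  case 0 then show ?case by simp
next
  case (Suc d)
  define b where "b = (Suc k + d) mod N"
  have kN: "k < N" using assms by (simp add: less_mult_imp_div_less mult.commute)
  have IH: "(RR N x)\<^sup>*\<^sup>* (26*(Suc k mod N)) (26*b)" using Suc b_def by simp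
  have bk: "b \<noteq> k" using modne[OF kN, of d] Suc b_def by simp
  have bN: "b < N" using assms b_def by simp
  have full: "\<forall>c<26. x \<noteq> 26*b+c" using bk assms(3) by auto
  have s1: "(RR N x)\<^sup>*\<^sup>* (26*b) (26*b+18)"
    using RR_rsym[OF block_full[OF bN full, of 18]] by simp
  have sb: "Suc b mod N = (Suc k + Suc d) mod N" using b_def by (simp add: mod_Suc_eq)
  have sbk: "Suc b mod N \<noteq> k" using sb modne[OF kN, of "Suc d"] Suc by simp
  have "RR N x (26*b+18) (26*(Suc b mod N))"
  proof (rule cross[OF bN])
    show "26 * b + 18 \<noteq> x" using full[rule_format, of 18] by simp
    show "26 * (Suc b mod N) \<noteq> x" using blockne[of x "Suc b mod N" 0] sbk assms(3) by simp
  qed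
  then show ?case using IH s1 sb by (metis rtranclp.rtrancl_into_rtrancl rtranclp_trans)
qed

lemma other_reach: assumes "x < 26*N" "2 \<le> N" "k = x div 26" "i < N" "i \<noteq> k" "j < 26"
  shows "(RR N x)\<^sup>*\<^sup>* (26*i+j) (26*(Suc k mod N))"
proof -
  have kN: "k < N" using assms by (simp add: less_mult_imp_div_less mult.commute)
  define d where "d = (if i > k then i - Suc k else i + N - Suc k)"
  have d1: "d + 1 < N" using d_def kN assms(4,5) by auto
  have "Suc k + d = (if i > k then i else i + N)" using d_def kN assms(4,5) by auto
  then have "(Suc k + d) mod N = i" using assms(4) by auto
  then have h1: "(RR N x)\<^sup>*\<^sup>* (26*(Suc k mod N)) (26*i)" using chain[OF assms(1,2,3) d1] by simp
  have full: "\<forall>c<26. x \<noteq> 26*i+c" using assms(3,5) by auto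
  show ?thesis using block_full[OF assms(4) full assms(6)] RR_rsym[OF h1] by (meson rtranclp_trans)
qed

lemma all_reach: assumes "x < 26*N" "2 \<le> N" "w \<in> GV N - {x}"
  shows "(RR N x)\<^sup>*\<^sup>* w (26*(Suc (x div 26) mod N))"
proof -
  define k where "k = x div 26"
  define i where "i = w div 26"
  define j where "j = w mod 26"
  have w: "w = 26*i+j" "j < 26" by (auto simp: i_def j_def)
  have kN: "k < N" using assms by (simp add: k_def less_mult_imp_div_less mult.commute)
  have iN: "i < N" using assms by (simp add: GV_def i_def less_mult_imp_div_less mult.commute)
  show ?thesis
  proof (cases "i = k")
    case False
    then show ?thesis using other_reach[OF assms(1,2) k_def iN False w(2)] w k_def by simp
  next
    case True
    have wx: "x \<noteq> 26*k+j" using assms(3) w True by auto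
    have tk: "Suc k mod N \<noteq> k" using modne[OF kN, of 0] assms(2) by simp
    have tN: "Suc k mod N < N" using kN by simp
    from block_reach[OF kN w(2) wx] show ?thesis
    proof
      assume h: "(RR N x)\<^sup>*\<^sup>* (26*k+j) (26*k)"
      have z: "26*k \<in> GV N - {x}" using RR_end[OF h] assms(3) w True by simp
      define p where "p = (k + N - 1) mod N"
      have pN: "p < N" using kN p_def by simp
      have sp: "Suc p mod N = k" using predmod[OF kN] p_def by simp
      have pk: "p \<noteq> k" using sp tk by auto
      have "RR N x (26*k) (26*p+18)"
        unfolding RR_def GE_def using z pN sp blockne[of x p 18] pk k_def by (auto simp: GV_def)
      moreover have "(RR N x)\<^sup>*\<^sup>* (26*p+18) (26*(Suc k mod N))"
        using other_reach[OF assms(1,2) k_def pN pk] by simp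
      ultimately show ?thesis using h w True k_def by (metis converse_rtranclp_into_rtranclp rtranclp_trans)
    next
      assume h: "(RR N x)\<^sup>*\<^sup>* (26*k+j) (26*k+18)"
      have z: "26*k+18 \<in> GV N - {x}" using RR_end[OF h] assms(3) w True by simp
      have "RR N x (26*k+18) (26*(Suc k mod N))"
        by (rule cross[OF kN]) (use z tk k_def blockne[of x "Suc k mod N" 0] in auto)
      then show ?thesis using h w True k_def by (metis rtranclp.rtrancl_into_rtrancl)
    qed
  qed
qed

lemma conn_minus: assumes "x \<in> GV N" "2 \<le> N" shows "connected_graph (GV N - {x}) (GE N)"
proof -
  have x: "x < 26*N" using assms by (simp add: GV_def)
  define t where "t = 26*(Suc (x div 26) mod N)"
  have eq: "(\<lambda>u v. u \<in> GV N - {x} \<and> v \<in> GV N - {x} \<and> GE N u v) = RR N x"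
    by (intro ext) (simp add: RR_def)
  have kN: "x div 26 < N" using x by (simp add: less_mult_imp_div_less mult.commute)
  have tN: "Suc (x div 26) mod N < N" using kN by simp
  have tk: "Suc (x div 26) mod N \<noteq> x div 26" using modne[OF kN, of 0] assms(2) by simp
  have tin: "t \<in> GV N - {x}" using tN tk blockne[of x "Suc (x div 26) mod N" 0] 
    by (auto simp: t_def GV_def)
  have r: "\<And>w. w \<in> GV N - {x} \<Longrightarrow> (RR N x)\<^sup>*\<^sup>* w t" using all_reach[OF x assms(2)] t_def by simp
  show ?thesis unfolding connected_graph_def eq
  proof (intro conjI ballI)
    show "GV N - {x} \<noteq> {}" using tin by blast
    fix u v assume u: "u \<in> GV N - {x}" and v: "v \<in> GV N - {x}"
    have "(RR N x)\<^sup>*\<^sup>* u t" using r u by blast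
    moreover have "(RR N x)\<^sup>*\<^sup>* t v" using RR_rsym r v by blast
    ultimately show "(RR N x)\<^sup>*\<^sup>* u v" by (rule rtranclp_trans)
  qed
qed

lemma conn_full: assumes "2 \<le> N" shows "connected_graph (GV N) (GE N)"
proof -
  define R0 where "R0 = (\<lambda>u v. u \<in> GV N \<and> v \<in> GV N \<and> GE N u v)"
  have in01: "0 \<in> GV N" "1 \<in> GV N" using assms by (auto simp: GV_def)
  define t where "t = 26*(Suc 0 mod N)"
  have mono: "\<And>x. RR N x \<le> R0"
    by (auto simp: RR_def R0_def)
  have r: "\<And>w. w \<in> GV N \<Longrightarrow> R0\<^sup>*\<^sup>* w t"
  proof -
    fix w assume w: "w \<in> GV N"
    show "R0\<^sup>*\<^sup>* w t"
    proof (cases "w = 0")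
      case False
      then have "(RR N 0)\<^sup>*\<^sup>* w t" using all_reach[of 0 N w] w in01 assms t_def by (simp add: GV_def)
      then show ?thesis using rtranclp_mono[OF mono[of 0]] by blast
    next
      case True
      then have "(RR N 1)\<^sup>*\<^sup>* w t" using all_reach[of 1 N w] w in01 assms t_def by (simp add: GV_def)
      then show ?thesis using rtranclp_mono[OF mono[of 1]] by blast
    qed
  qed
  have sym: "\<And>a b. R0 a b \<Longrightarrow> R0 b a"
    using GE_sym unfolding R0_def by blast
  have rs: "\<And>a b. R0\<^sup>*\<^sup>* a b \<Longrightarrow> R0\<^sup>*\<^sup>* b a"
    by (rule rtranclp_symm[of R0]) (rule sym)
  show ?thesis unfolding connected_graph_def R0_def[symmetric]
  proof (intro conjI ballI)
    show "GV N \<noteq> {}" using in01 by blast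
    fix u v assume u: "u \<in> GV N" and v: "v \<in> GV N"
    have "R0\<^sup>*\<^sup>* u t" using r u by blast
    moreover have "R0\<^sup>*\<^sup>* t v" using rs r v by blast
    ultimately show "R0\<^sup>*\<^sup>* u v" by (rule rtranclp_trans)
  qed
qed

lemma twoconn: assumes "2 \<le> N" shows "two_connected (GV N) (GE N)"
  unfolding two_connected_def using conn_full[OF assms] conn_minus[OF _ assms] assms
  by (simp add: GV_def)
section \<open>No Lambda-factor\<close>

definition comp :: "('a \<Rightarrow> 'a \<Rightarrow> bool) \<Rightarrow> 'a \<Rightarrow> 'a set" where "comp F x = {y. F\<^sup>*\<^sup>* x y}"

lemma LF_sym: "Lambda_factor V E F \<Longrightarrow> F a b \<Longrightarrow> F b a"
  by (simp add: Lambda_factor_def simple_graph_def)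
lemma LF_in: "Lambda_factor V E F \<Longrightarrow> F a b \<Longrightarrow> a \<in> V \<and> b \<in> V"
  by (simp add: Lambda_factor_def simple_graph_def)
lemma LF_E: "Lambda_factor V E F \<Longrightarrow> F a b \<Longrightarrow> E a b"
  by (simp add: Lambda_factor_def)
lemma LF_fin: "Lambda_factor V E F \<Longrightarrow> finite V"
  by (simp add: Lambda_factor_def simple_graph_def)
lemma LF_rsym: "Lambda_factor V E F \<Longrightarrow> F\<^sup>*\<^sup>* a b \<Longrightarrow> F\<^sup>*\<^sup>* b a"
  using rtranclp_symm[of F] LF_sym by metis

lemma comp_self: "x \<in> comp F x" by (simp add: comp_def)

lemma comp_eq: assumes "Lambda_factor V E F" "y \<in> comp F x" shows "comp F y = comp F x"
proof -
  have xy: "F\<^sup>*\<^sup>* x y" using assms by (simp add: comp_def)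
  then have yx: "F\<^sup>*\<^sup>* y x" using LF_rsym[OF assms(1)] by blast
  show ?thesis unfolding comp_def
  proof (intro set_eqI iffI; simp)
    fix z assume "F\<^sup>*\<^sup>* y z" then show "F\<^sup>*\<^sup>* x z" using xy by (rule rtranclp_trans[rotated])
  next
    fix z assume "F\<^sup>*\<^sup>* x z" then show "F\<^sup>*\<^sup>* y z" using yx by (rule rtranclp_trans[rotated])
  qed
qed

lemma comp_disj: assumes "Lambda_factor V E F" "comp F x \<noteq> comp F y"
  shows "comp F x \<inter> comp F y = {}"
  using comp_eq[OF assms(1)] assms(2) by blast

lemma comp_P3: "Lambda_factor V E F \<Longrightarrow> x \<in> V \<Longrightarrow> is_P3 (comp F x) F"
  by (simp add: Lambda_factor_def comp_def)

lemma comp_card: assumes "Lambda_factor V E F" "x \<in> V" shows "card (comp F x) = 3" "finite (comp F x)"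
  using comp_P3[OF assms] unfolding is_P3_def by auto

lemma comp_near: assumes LF: "Lambda_factor V E F" and "x \<in> V" "u \<in> comp F x" "v \<in> comp F x" "u \<noteq> v"
  shows "E u v \<or> (\<exists>w. E u w \<and> E w v)"
proof -
  obtain a b c where abc: "comp F x = {a,b,c}" "F a b" "F b c"
    using comp_P3[OF LF assms(2)] unfolding is_P3_def by blast
  have e: "E a b" "E b c" "E b a" "E c b" using abc LF_E[OF LF] LF_sym[OF LF] by blast+
  show ?thesis using assms(3,4,5) abc(1) e by auto
qed

lemma comp_closed_sub: assumes "\<forall>a\<in>Y. \<forall>b. F a b \<longrightarrow> b \<in> Y" "x \<in> Y" shows "comp F x \<subseteq> Y"
proof
  fix y assume "y \<in> comp F x"
  then have "F\<^sup>*\<^sup>* x y" by (simp add: comp_def)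
  then show "y \<in> Y" by (induction rule: rtranclp_induct) (use assms in auto)
qed

lemma close3: assumes LF: "Lambda_factor V E F"
  shows "finite Y \<Longrightarrow> Y \<subseteq> V \<Longrightarrow> \<forall>a\<in>Y. \<forall>b. F a b \<longrightarrow> b \<in> Y \<Longrightarrow> 3 dvd card Y"
proof (induction "card Y" arbitrary: Y rule: less_induct)
  case less
  show ?case
  proof (cases "Y = {}")
    case True then show ?thesis by simp
  next
    case False
    then obtain a where a: "a \<in> Y" by blast
    have sub: "comp F a \<subseteq> Y" using comp_closed_sub[OF less(4) a] .
    have c3: "card (comp F a) = 3" "finite (comp F a)" using comp_card[OF LF] a less(3) by auto
    define Y' where "Y' = Y - comp F a"
    have cD: "card Y' = card Y - card (comp F a)" unfolding Y'_def by (rule card_Diff_subset[OF c3(2) sub])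
    have cm: "card (comp F a) \<le> card Y" by (rule card_mono[OF less(2) sub])
    have cY: "card Y = card Y' + 3" using cD cm c3(1) by linarith
    have cl: "\<forall>a'\<in>Y'. \<forall>b. F a' b \<longrightarrow> b \<in> Y'"
    proof (intro ballI allI impI)
      fix a' b assume a': "a' \<in> Y'" and f: "F a' b"
      have "b \<in> Y" using less(4) a' f by (auto simp: Y'_def)
      moreover have "b \<notin> comp F a"
      proof
        assume "b \<in> comp F a"
        then have "F\<^sup>*\<^sup>* a b" by (simp add: comp_def)
        then have "F\<^sup>*\<^sup>* a a'" using LF_sym[OF LF f] by (meson rtranclp.rtrancl_into_rtrancl)
        then show False using a' by (simp add: Y'_def comp_def)
      qed
      ultimately show "b \<in> Y'" by (simp add: Y'_def)
    qed
    have "card Y' < card Y" using cY by simp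
    moreover have "finite Y'" using less(2) by (simp add: Y'_def)
    moreover have "Y' \<subseteq> V" using less(3) by (auto simp: Y'_def)
    ultimately have "3 dvd card Y'" using less(1) cl by blast
    then show ?thesis using cY by simp
  qed
qed

lemma gadget: assumes LF: "Lambda_factor V E F" and X: "X \<subseteq> V" and y: "ya \<in> V" "yb \<in> V" "ya \<notin> X" "yb \<notin> X"
  and ne: "comp F ya \<noteq> comp F yb"
  and out: "\<forall>a\<in>X. \<forall>b. E a b \<longrightarrow> b \<in> X \<or> b = ya \<or> b = yb"
  shows "(card (comp F ya \<inter> X) + card (comp F yb \<inter> X)) mod 3 = card X mod 3"
proof -
  have fX: "finite X" using LF_fin[OF LF] X finite_subset by blast
  define X' where "X' = X - comp F ya - comp F yb"
  have cl: "\<forall>a\<in>X'. \<forall>b. F a b \<longrightarrow> b \<in> X'"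
  proof (intro ballI allI impI)
    fix a b assume a: "a \<in> X'" and f: "F a b"
    have fb: "F b a" using LF_sym[OF LF f] .
    have nb: "b \<notin> comp F ya" "b \<notin> comp F yb"
    proof -
      show "b \<notin> comp F ya"
      proof
        assume "b \<in> comp F ya" then have "F\<^sup>*\<^sup>* ya b" by (simp add: comp_def)
        then have "F\<^sup>*\<^sup>* ya a" using fb by (meson rtranclp.rtrancl_into_rtrancl)
        then show False using a by (simp add: X'_def comp_def)
      qed
      show "b \<notin> comp F yb"
      proof
        assume "b \<in> comp F yb" then have "F\<^sup>*\<^sup>* yb b" by (simp add: comp_def)
        then have "F\<^sup>*\<^sup>* yb a" using fb by (meson rtranclp.rtrancl_into_rtrancl)
        then show False using a by (simp add: X'_def comp_def)
      qed
    qed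
    have aX: "a \<in> X" using a by (simp add: X'_def)
    have bX: "b \<in> X \<or> b = ya \<or> b = yb" using out aX LF_E[OF LF f] by blast
    have "b \<noteq> ya" using nb(1) comp_self[of ya F] by blast
    moreover have "b \<noteq> yb" using nb(2) comp_self[of yb F] by blast
    ultimately have "b \<in> X" using bX by blast
    then show "b \<in> X'" using nb by (simp add: X'_def)
  qed
  have fX': "finite X'" using fX by (simp add: X'_def)
  have sX': "X' \<subseteq> V" using X by (auto simp: X'_def)
  have d3: "3 dvd card X'" using close3[OF LF fX' sX' cl] .
  have dis: "comp F ya \<inter> comp F yb = {}" using comp_disj[OF LF ne] .
  have XU: "X = X' \<union> (comp F ya \<inter> X) \<union> (comp F yb \<inter> X)" by (auto simp: X'_def)
  have f1: "finite X'" "finite (comp F ya \<inter> X)" "finite (comp F yb \<inter> X)" using fX by (auto simp: X'_def)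
  have e1: "X' \<inter> (comp F ya \<inter> X) = {}" by (auto simp: X'_def)
  have e2: "(X' \<union> (comp F ya \<inter> X)) \<inter> (comp F yb \<inter> X) = {}" using dis by (auto simp: X'_def)
  have "card (X' \<union> (comp F ya \<inter> X) \<union> (comp F yb \<inter> X)) = card (X' \<union> (comp F ya \<inter> X)) + card (comp F yb \<inter> X)"
    by (rule card_Un_disjoint) (use f1 e2 in auto)
  moreover have "card (X' \<union> (comp F ya \<inter> X)) = card X' + card (comp F ya \<inter> X)"
    by (rule card_Un_disjoint) (use f1 e1 in auto)
  ultimately have "card X = card X' + card (comp F ya \<inter> X) + card (comp F yb \<inter> X)"
    using XU by simp
  then show ?thesis using d3 by presburger
qed

lemma core: assumes LF: "Lambda_factor V E F" and u: "u \<in> V"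
  and d: "P \<inter> Q = {}" "P \<inter> R = {}" "Q \<inter> R = {}" "u \<notin> P" "u \<notin> Q" "u \<notin> R"
  shows "card (comp F u \<inter> P) + card (comp F u \<inter> Q) + card (comp F u \<inter> R) \<le> 2"
proof -
  have c3: "card (comp F u) = 3" "finite (comp F u)" using comp_card[OF LF u] by auto
  have sub: "insert u ((comp F u \<inter> P) \<union> (comp F u \<inter> Q) \<union> (comp F u \<inter> R)) \<subseteq> comp F u"
    using comp_self[of u F] by auto
  have f: "finite (comp F u \<inter> P)" "finite (comp F u \<inter> Q)" "finite (comp F u \<inter> R)" using c3 by auto
  have e1: "card ((comp F u \<inter> P) \<union> (comp F u \<inter> Q)) = card (comp F u \<inter> P) + card (comp F u \<inter> Q)"
    by (rule card_Un_disjoint) (use f d(1) in auto)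
  have e2: "card ((comp F u \<inter> P) \<union> (comp F u \<inter> Q) \<union> (comp F u \<inter> R)) = card ((comp F u \<inter> P) \<union> (comp F u \<inter> Q)) + card (comp F u \<inter> R)"
    by (rule card_Un_disjoint) (use f d(2,3) in auto)
  have e3: "card (insert u ((comp F u \<inter> P) \<union> (comp F u \<inter> Q) \<union> (comp F u \<inter> R))) = Suc (card ((comp F u \<inter> P) \<union> (comp F u \<inter> Q) \<union> (comp F u \<inter> R)))"
    by (rule card_insert_disjoint) (use f d(4,5,6) in auto)
  have "card (insert u ((comp F u \<inter> P) \<union> (comp F u \<inter> Q) \<union> (comp F u \<inter> R)))
      = 1 + card (comp F u \<inter> P) + card (comp F u \<inter> Q) + card (comp F u \<inter> R)"
    using e1 e2 e3 by simp
  moreover have "card (insert u ((comp F u \<inter> P) \<union> (comp F u \<inter> Q) \<union> (comp F u \<inter> R))) \<le> 3"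
    using card_mono[OF c3(2) sub] c3 by simp
  ultimately show ?thesis by simp
qed

lemma distinct_comp: assumes LF: "Lambda_factor V E F" and "u \<in> V" "v \<in> V" "u \<noteq> v" "\<not> E u v"
  "\<not> (\<exists>w. E u w \<and> E w v)" shows "comp F u \<noteq> comp F v"
proof
  assume eq: "comp F u = comp F v"
  have "u \<in> comp F u" "v \<in> comp F u" using comp_self eq by metis+
  then show False using comp_near[OF LF assms(2)] assms by blast
qed

lemma nbmem: "a < 26*N \<Longrightarrow> GE N a b \<Longrightarrow> b \<in> (\<lambda>k. 26*(a div 26)+k) ` set (nbl (a mod 26))
     \<union> (if a mod 26 = 18 then {26*(Suc (a div 26) mod N)} else {})
     \<union> (if a mod 26 = 0 then {26*((a div 26 + N - 1) mod N) + 18} else {})"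
  using GE_nb by blast

lemma noLF: assumes N2: "2 \<le> N" shows "\<not> has_Lambda_factor (GV N) (GE N)"
proof
  assume "has_Lambda_factor (GV N) (GE N)"
  then obtain F where LF: "Lambda_factor (GV N) (GE N) F" by (auto simp: has_Lambda_factor_def)
  have s1: "Suc 0 mod N = 1" using N2 by simp
  have s3: "of_bool (N \<noteq> Suc 0) = (1::nat)" using N2 by simp
  have s2: "(N - Suc 0) mod N = N - 1" using N2 by simp
  have lt: "\<And>a::nat. a < 52 \<Longrightarrow> a < 26*N" using N2 by linarith
  define P0 where "P0 = {2,3,4,5,6,7,8,9::nat}"
  define Q0 where "Q0 = {10,11,12,13,14,15,16,17::nat}"
  define R0 where "R0 = {18,19,20,21,22,23,24,25::nat}"
  define P1 where "P1 = {28,29,30,31,32,33,34,35::nat}"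
  define Q1 where "Q1 = {36,37,38,39,40,41,42,43::nat}"
  have inV: "\<And>a. a < 52 \<Longrightarrow> a \<in> GV N" using lt by (simp add: GV_def)
  have subV: "P0 \<subseteq> GV N" "Q0 \<subseteq> GV N" "R0 \<subseteq> GV N" "P1 \<subseteq> GV N" "Q1 \<subseteq> GV N"
    using inV by (auto simp: P0_def Q0_def R0_def P1_def Q1_def)
  have oP0: "\<forall>a\<in>P0. \<forall>b. GE N a b \<longrightarrow> b \<in> P0 \<or> b = 0 \<or> b = 1"
  proof (intro ballI allI impI)
    fix a b assume a: "a \<in> P0" and g: "GE N a b"
    have "a < 52" using a by (auto simp: P0_def)
    from nbmem[OF lt[OF this] g] a show "b \<in> P0 \<or> b = 0 \<or> b = 1" by (auto simp: P0_def nbl_def)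
  qed
  have oQ0: "\<forall>a\<in>Q0. \<forall>b. GE N a b \<longrightarrow> b \<in> Q0 \<or> b = 0 \<or> b = 1"
  proof (intro ballI allI impI)
    fix a b assume a: "a \<in> Q0" and g: "GE N a b"
    have "a < 52" using a by (auto simp: Q0_def)
    from nbmem[OF lt[OF this] g] a show "b \<in> Q0 \<or> b = 0 \<or> b = 1" by (auto simp: Q0_def nbl_def)
  qed
  have n18: "\<And>b. GE N 18 b \<Longrightarrow> b \<in> R0 \<or> b = 26"
  proof -
    fix b assume g: "GE N 18 b"
    have h: "Suc (18 div 26) mod N = 1" using N2 by simp
    have "b \<in> (\<lambda>k. 26*(18 div 26)+k) ` set (nbl (18 mod 26)) \<union> {26*1}"
      using nbmem[OF lt g] unfolding h by simp
    then have "b = 26 \<or> b = 20 \<or> b = 22" by (simp add: nbl_def)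
    then show "b \<in> R0 \<or> b = 26" unfolding R0_def by blast
  qed
  have oR0: "\<forall>a\<in>R0. \<forall>b. GE N a b \<longrightarrow> b \<in> R0 \<or> b = 1 \<or> b = 26"
  proof (intro ballI allI impI)
    fix a b assume a: "a \<in> R0" and g: "GE N a b"
    show "b \<in> R0 \<or> b = 1 \<or> b = 26"
    proof (cases "a = 18")
      case True then show ?thesis using n18 g by blast
    next
      case False
      then have a': "a \<in> {19,20,21,22,23,24,25}" using a by (auto simp: R0_def)
      then have "a < 52" by auto
      from nbmem[OF lt[OF this] g] a' show ?thesis by (auto simp: R0_def nbl_def)
    qed
  qed
  have oP1: "\<forall>a\<in>P1. \<forall>b. GE N a b \<longrightarrow> b \<in> P1 \<or> b = 26 \<or> b = 27"
  proof (intro ballI allI impI)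
    fix a b assume a: "a \<in> P1" and g: "GE N a b"
    have "a < 52" using a by (auto simp: P1_def)
    from nbmem[OF lt[OF this] g] a show "b \<in> P1 \<or> b = 26 \<or> b = 27" by (auto simp: P1_def nbl_def)
  qed
  have oQ1: "\<forall>a\<in>Q1. \<forall>b. GE N a b \<longrightarrow> b \<in> Q1 \<or> b = 26 \<or> b = 27"
  proof (intro ballI allI impI)
    fix a b assume a: "a \<in> Q1" and g: "GE N a b"
    have "a < 52" using a by (auto simp: Q1_def)
    from nbmem[OF lt[OF this] g] a show "b \<in> Q1 \<or> b = 26 \<or> b = 27" by (auto simp: Q1_def nbl_def)
  qed
  have n0: "\<And>b. GE N 0 b \<Longrightarrow> b = 2 \<or> b = 10 \<or> b \<ge> 44"
  proof -
    fix b assume g: "GE N 0 b"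
    from nbmem[OF lt g] show "b = 2 \<or> b = 10 \<or> b \<ge> 44" using N2 by (auto simp: nbl_def)
  qed
  have n1: "\<And>b. GE N 1 b \<Longrightarrow> b = 3 \<or> b = 11 \<or> b = 19"
  proof -
    fix b assume g: "GE N 1 b"
    from nbmem[OF lt g] show "b = 3 \<or> b = 11 \<or> b = 19" by (auto simp: nbl_def)
  qed
  have n26: "\<And>b. GE N 26 b \<Longrightarrow> b = 28 \<or> b = 36 \<or> b = 18"
  proof -
    fix b assume g: "GE N 26 b"
    from nbmem[OF lt g] show "b = 28 \<or> b = 36 \<or> b = 18" by (auto simp: nbl_def)
  qed
  have n27: "\<And>b. GE N 27 b \<Longrightarrow> b = 29 \<or> b = 37 \<or> b = 45"
  proof -
    fix b assume g: "GE N 27 b"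
    from nbmem[OF lt g] show "b = 29 \<or> b = 37 \<or> b = 45" by (auto simp: nbl_def)
  qed
  have d01: "comp F 0 \<noteq> comp F 1"
  proof (rule distinct_comp[OF LF inV inV])
    show "\<not> GE N 0 1" using n0[of 1] by auto
    show "\<not> (\<exists>w. GE N 0 w \<and> GE N w 1)"
    proof
      assume "\<exists>w. GE N 0 w \<and> GE N w 1"
      then obtain w where w: "GE N 0 w" "GE N w 1" by blast
      have A: "w = 2 \<or> w = 10 \<or> w \<ge> 44" using n0[OF w(1)] .
      have B: "w = 3 \<or> w = 11 \<or> w = 19" using n1[OF GE_sym[OF w(2)]] .
      from A B show False by auto
    qed
  qed (simp_all)
  have d126: "comp F 1 \<noteq> comp F 26"
  proof (rule distinct_comp[OF LF inV inV])
    show "\<not> GE N 1 26" using n1[of 26] by auto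
    show "\<not> (\<exists>w. GE N 1 w \<and> GE N w 26)"
    proof
      assume "\<exists>w. GE N 1 w \<and> GE N w 26"
      then obtain w where w: "GE N 1 w" "GE N w 26" by blast
      have A: "w = 3 \<or> w = 11 \<or> w = 19" using n1[OF w(1)] .
      have B: "w = 28 \<or> w = 36 \<or> w = 18" using n26[OF GE_sym[OF w(2)]] .
      from A B show False by auto
    qed
  qed (simp_all)
  have d2627: "comp F 26 \<noteq> comp F 27"
  proof (rule distinct_comp[OF LF inV inV])
    show "\<not> GE N 26 27" using n26[of 27] by auto
    show "\<not> (\<exists>w. GE N 26 w \<and> GE N w 27)"
    proof
      assume "\<exists>w. GE N 26 w \<and> GE N w 27"
      then obtain w where w: "GE N 26 w" "GE N w 27" by blast
      have A: "w = 28 \<or> w = 36 \<or> w = 18" using n26[OF w(1)] .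
      have B: "w = 29 \<or> w = 37 \<or> w = 45" using n27[OF GE_sym[OF w(2)]] .
      from A B show False by auto
    qed
  qed (simp_all)
  have gP0: "(card (comp F 0 \<inter> P0) + card (comp F 1 \<inter> P0)) mod 3 = card P0 mod 3"
    by (rule gadget[OF LF subV(1) inV inV _ _ d01 oP0]) (auto simp: P0_def)
  have gQ0: "(card (comp F 0 \<inter> Q0) + card (comp F 1 \<inter> Q0)) mod 3 = card Q0 mod 3"
    by (rule gadget[OF LF subV(2) inV inV _ _ d01 oQ0]) (auto simp: Q0_def)
  have gR0: "(card (comp F 1 \<inter> R0) + card (comp F 26 \<inter> R0)) mod 3 = card R0 mod 3"
    by (rule gadget[OF LF subV(3) inV inV _ _ d126 oR0]) (auto simp: R0_def)
  have gP1: "(card (comp F 26 \<inter> P1) + card (comp F 27 \<inter> P1)) mod 3 = card P1 mod 3"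
    by (rule gadget[OF LF subV(4) inV inV _ _ d2627 oP1]) (auto simp: P1_def)
  have gQ1: "(card (comp F 26 \<inter> Q1) + card (comp F 27 \<inter> Q1)) mod 3 = card Q1 mod 3"
    by (rule gadget[OF LF subV(5) inV inV _ _ d2627 oQ1]) (auto simp: Q1_def)
  have cards: "card P0 = 8" "card Q0 = 8" "card R0 = 8" "card P1 = 8" "card Q1 = 8"
    by (simp_all add: P0_def Q0_def R0_def P1_def Q1_def)
  have c0: "card (comp F 0 \<inter> P0) + card (comp F 0 \<inter> Q0) + card (comp F 0 \<inter> {}) \<le> 2"
    by (rule core[OF LF inV]) (auto simp: P0_def Q0_def)
  have c1: "card (comp F 1 \<inter> P0) + card (comp F 1 \<inter> Q0) + card (comp F 1 \<inter> R0) \<le> 2"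
    by (rule core[OF LF inV]) (auto simp: P0_def Q0_def R0_def)
  have c26: "card (comp F 26 \<inter> P1) + card (comp F 26 \<inter> Q1) + card (comp F 26 \<inter> R0) \<le> 2"
    by (rule core[OF LF inV]) (auto simp: P1_def Q1_def R0_def)
  have c27: "card (comp F 27 \<inter> P1) + card (comp F 27 \<inter> Q1) + card (comp F 27 \<inter> {}) \<le> 2"
    by (rule core[OF LF inV]) (auto simp: P1_def Q1_def)
  have m: "\<And>x::nat. x mod 3 = 2 \<Longrightarrow> 2 \<le> x" using mod_less_eq_dividend by (metis)
  have h1: "2 \<le> card (comp F 0 \<inter> P0) + card (comp F 1 \<inter> P0)" using m gP0 cards by simp
  have h2: "2 \<le> card (comp F 0 \<inter> Q0) + card (comp F 1 \<inter> Q0)" using m gQ0 cards by simp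
  have h3: "2 \<le> card (comp F 26 \<inter> P1) + card (comp F 27 \<inter> P1)" using m gP1 cards by simp
  have h4: "2 \<le> card (comp F 26 \<inter> Q1) + card (comp F 27 \<inter> Q1)" using m gQ1 cards by simp
  have z1: "card (comp F 1 \<inter> R0) = 0" using h1 h2 c0 c1 by simp
  have z2: "card (comp F 26 \<inter> R0) = 0" using h3 h4 c26 c27 by simp
  show False using gR0 z1 z2 cards by simp
qed

theorem mainTheorem2:
  shows "\<exists>(V :: nat \<Rightarrow> nat set) (E :: nat \<Rightarrow> nat \<Rightarrow> nat \<Rightarrow> bool).
    (\<forall>i. simple_graph (V i) (E i) \<and> two_connected (V i) (E i) \<and> cubic (V i) (E i)
         \<and> bipartite (V i) (E i) \<and> card (V i) mod 6 = 0
         \<and> \<not> has_Lambda_factor (V i) (E i))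
    \<and> (\<forall>i j. i \<noteq> j \<longrightarrow> \<not> graph_iso (V i) (E i) (V j) (E j))"
proof (intro exI[of _ "\<lambda>i::nat. GV (3*(i+1))"] exI[of _ "\<lambda>i::nat. GE (3*(i+1))"] conjI allI impI)
  fix i :: nat
  have N2: "2 \<le> 3*(i+1)" by simp
  show "simple_graph (GV (3*(i+1))) (GE (3*(i+1)))" by (rule simple)
  show "two_connected (GV (3*(i+1))) (GE (3*(i+1)))" by (rule twoconn[OF N2])
  show "cubic (GV (3*(i+1))) (GE (3*(i+1)))" by (rule cubicG[OF N2])
  show "bipartite (GV (3*(i+1))) (GE (3*(i+1)))" by (rule bipG)
  show "\<not> has_Lambda_factor (GV (3*(i+1))) (GE (3*(i+1)))" by (rule noLF[OF N2])
  have "card (GV (3*(i+1))) = 26*(3*(i+1))" by (simp add: GV_def)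
  then show "card (GV (3*(i+1))) mod 6 = 0" by presburger
next
  fix i j :: nat assume ij: "i \<noteq> j"
  show "\<not> graph_iso (GV (3*(i+1))) (GE (3*(i+1))) (GV (3*(j+1))) (GE (3*(j+1)))"
  proof
    assume "graph_iso (GV (3*(i+1))) (GE (3*(i+1))) (GV (3*(j+1))) (GE (3*(j+1)))"
    then obtain f where "bij_betw f (GV (3*(i+1))) (GV (3*(j+1)))" by (auto simp: graph_iso_def)
    then have "card (GV (3*(i+1))) = card (GV (3*(j+1)))" by (rule bij_betw_same_card)
    then show False using ij by (simp add: GV_def)
  qed
qed

end
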